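(* Let $k$ be a nonnegative integer. Then there exist rational numbers $\xi_0,\dots,\xi_{k-1}$ (depending only on $k$) such that for every strict partition $\lambda$, with inner corner contents $x_0,\dots,x_m$, and every $i\in\{0,\dots,m\}$ for which $\lambda^{i+}$ is defined, $$q_k(\lambda^{i+})-q_k(\lambda)=\sum_{j=0}^{k-1}\xi_j\binom{x_i}{2}^j.$$
   Context: A strict partition is a finite strictly decreasing sequence of positive integers $\lambda=(\lambda_1>\cdots>\lambda_\ell)$ (the empty sequence is allowed); $\ell(\lambda)=\ell$, and $\lambda_i=0$ for $i>\ell(\lambda)$. The (shifted Young) diagram of $\lambda$ is the set of boxes $(i,j)$ with $1\le i\le\ell(\lambda)$, $i+1\le j\le i+\lambda_i$ (row $i$, column $j$); $\lambda$ is identified with its diagram; the content of $\square=(i,j)$ is $c_\square=j-i$. An outer corner of $\lambda$ is a box of $\lambda$ whose removal leaves the diagram of a strict partition. Let $(\alpha_1,\beta_1),\dots,(\alpha_m,\beta_m)$ be the outer corners with $\alpha_1>\cdots>\alpha_m$, and $y_j=\beta_j-\alpha_j$. Set $\alpha_{m+1}=0$, $\beta_0=\ell(\lambda)+1$, and $x_i=\beta_i-\alpha_{i+1}$ for $0\le i\le m$ (inner corner contents); one has $x_0=1\le y_1<x_1<\cdots<y_m<x_m$. For $k\ge0$, $q_k(\lambda)=\sum_{i=0}^m\binom{x_i}{2}^k-\sum_{i=1}^m\binom{y_i}{2}^k$. For $1\le i\le m$, $\lambda^{i+}$ is the strict partition obtained from $\lambda$ by adding a box of content $x_i$; if $m=0$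 or $y_1>1$, $\lambda^{0+}$ is the strict partition obtained by adding a box of content $x_0=1$ (a new row of length 1), and $\lambda^{0+}$ is undefined otherwise. *)

theory Defs
  imports Complex_Main "HOL-Library.Product_Lexorder"
begin

definition strict_partition :: "nat list \<Rightarrow> bool" where
  "strict_partition la \<longleftrightarrow> sorted_wrt (>) la \<and> (\<forall>x\<in>set la. 0 < x)"

definition diagram :: "nat list \<Rightarrow> (nat \<times> nat) set" where
  "diagram la = {(i, j). 1 \<le> i \<and> i \<le> length la \<and> i + 1 \<le> j \<and> j \<le> i + la ! (i - 1)}"

definition content :: "nat \<times> nat \<Rightarrow> int" where
  "content b = int (snd b) - int (fst b)"

definition outer_corners :: "nat list \<Rightarrow> (nat \<times> nat) set" where
  "outer_corners la = {b \<in> diagram la. \<exists>mu. strict_partition mu \<and> diagram mu = diagram la - {b}}"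

definition num_corners :: "nat list \<Rightarrow> nat" where
  "num_corners la = card (outer_corners la)"

text \<open>The outer corners listed with strictly decreasing row index alpha_1 > ... > alpha_m
  (rows of distinct corners are distinct, so lexicographic order on pairs is row order).\<close>

definition corner :: "nat list \<Rightarrow> nat \<Rightarrow> nat \<times> nat" where
  "corner la j = rev (sorted_list_of_set (outer_corners la)) ! (j - 1)"

definition alpha :: "nat list \<Rightarrow> nat \<Rightarrow> nat" where
  "alpha la j = (if 1 \<le> j \<and> j \<le> num_corners la then fst (corner la j) else 0)"

definition beta :: "nat list \<Rightarrow> nat \<Rightarrow> nat" where
  "beta la j = (if j = 0 then length la + 1 else snd (corner la j))"

text \<open>Inner corner contents x_i = beta_i - alpha_(i+1) (0 <= i <= m), outer corner contents
  y_j = beta_j - alpha_j (1 <= j <= m).\<close>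
definition xcont :: "nat list \<Rightarrow> nat \<Rightarrow> int" where
  "xcont la i = int (beta la i) - int (alpha la (i + 1))"

definition ycont :: "nat list \<Rightarrow> nat \<Rightarrow> int" where
  "ycont la j = int (beta la j) - int (alpha la j)"

definition binom2 :: "int \<Rightarrow> int" where
  "binom2 x = x * (x - 1) div 2"

definition qk :: "nat \<Rightarrow> nat list \<Rightarrow> rat" where
  "qk k la = (\<Sum>i = 0..num_corners la. of_int (binom2 (xcont la i)) ^ k)
            - (\<Sum>i = 1..num_corners la. of_int (binom2 (ycont la i)) ^ k)"

definition plus_partition :: "nat list \<Rightarrow> nat \<Rightarrow> nat list \<Rightarrow> bool" where
  "plus_partition la i mu \<longleftrightarrow>
     i \<le> num_corners la \<and> (i = 0 \<longrightarrow> num_corners la = 0 \<or> ycont la 1 > 1) \<and>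
     strict_partition mu \<and>
     (\<exists>b. b \<notin> diagram la \<and> content b = xcont la i \<and> diagram mu = insert b (diagram la))"

end

theory Submission
  imports Defs "HOL-Computational_Algebra.Polynomial"
begin

definition FF :: "nat \<Rightarrow> int \<Rightarrow> rat" where
  "FF k x = (of_int (binom2 x)) ^ k"

lemma binom2_rat: "(of_int (binom2 c) :: rat) = of_int c * (of_int c - 1) / 2"
proof -
  have "even (c * (c - 1))" by simp
  then have "c * (c - 1) = 2 * (c * (c - 1) div 2)" by simp
  then have "(of_int (c * (c - 1)) :: rat) = 2 * of_int (c * (c - 1) div 2)"
    by (metis of_int_mult of_int_numeral)
  then show ?thesis unfolding binom2_def by (simp add: field_simps)
qed

lemma poly_sum_lt:
  fixes p :: "rat poly"
  assumes "\<forall>j\<ge>n. coeff p j = 0"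
  shows "poly p x = (\<Sum>j<n. coeff p j * x ^ j)"
proof (cases "p = 0")
  case True then show ?thesis by simp
next
  case False
  then have "coeff p (degree p) \<noteq> 0" by simp
  then have d: "degree p < n" using assms by (meson not_le)
  have "poly p x = (\<Sum>j\<le>degree p. coeff p j * x ^ j)" by (rule poly_altdef)
  also have "\<dots> = (\<Sum>j<n. coeff p j * x ^ j)"
    apply (rule sum.mono_neutral_left)
    using d by (auto simp: coeff_eq_0)
  finally show ?thesis .
qed

lemma second_diff_poly:
  "\<exists>\<xi> :: nat \<Rightarrow> rat. \<forall>c. FF k (c + 1) - 2 * FF k c + FF k (c - 1)
      = (\<Sum>j<k. \<xi> j * of_int (binom2 c) ^ j)"
proof -
  define A :: "rat poly" where "A = [:1/2, 1:]"
  define B :: "rat poly" where "B = [:1/4, 2:]"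
  define P where "P = (\<Sum>e\<le>k. (if even e then smult (2 * of_nat (k choose e)) (B ^ (e div 2) * A ^ (k - e)) else 0)) - smult 2 ([:0,1:] ^ k)"
  have val: "FF k (c + 1) - 2 * FF k c + FF k (c - 1) = poly P (of_int (binom2 c))" for c
  proof -
    define t :: rat where "t = of_int (binom2 c)"
    define a :: rat where "a = of_int c - 1/2"
    define b :: rat where "b = t + 1/2"
    have t: "t = of_int c * (of_int c - 1) / 2" unfolding t_def by (rule binom2_rat)
    have e1: "(of_int (binom2 (c+1)) :: rat) = b + a"
      unfolding binom2_rat a_def b_def t by (simp add: field_simps)
    have e2: "(of_int (binom2 (c-1)) :: rat) = b - a"
      unfolding binom2_rat a_def b_def t by (simp add: field_simps)
    have a2: "a^2 = 2*t + 1/4" unfolding a_def t by (simp add: field_simps power2_eq_square)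
    have "(a + b)^k + (-a + b)^k = (\<Sum>e\<le>k. of_nat (k choose e) * (a ^ e + (-a)^e) * b ^ (k - e))"
      unfolding binomial_ring[of a b k] binomial_ring[of "-a" b k] sum.distrib[symmetric]
      by (simp add: algebra_simps)
    also have "\<dots> = (\<Sum>e\<le>k. (if even e then 2 * of_nat (k choose e) * ((2*t+1/4) ^ (e div 2) * b ^ (k - e)) else 0))"
    proof (rule sum.cong[OF refl])
      fix e assume "e \<in> {..k}"
      show "of_nat (k choose e) * (a ^ e + (-a)^e) * b ^ (k - e) = (if even e then 2 * of_nat (k choose e) * ((2*t+1/4) ^ (e div 2) * b ^ (k - e)) else 0)"
      proof (cases "even e")
        case True
        then obtain h where h: "e = 2*h" by blast
        have "a ^ e = (2*t+1/4) ^ (e div 2)" using h a2 by (simp add: power_mult)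
        then show ?thesis using True by simp
      next
        case False
        then show ?thesis by simp
      qed
    qed
    also have "\<dots> = poly (\<Sum>e\<le>k. (if even e then smult (2 * of_nat (k choose e)) (B ^ (e div 2) * A ^ (k - e)) else 0)) t"
      unfolding poly_sum by (rule sum.cong) (auto simp: A_def B_def b_def algebra_simps)
    finally have "(a + b)^k + (-a + b)^k = poly (\<Sum>e\<le>k. (if even e then smult (2 * of_nat (k choose e)) (B ^ (e div 2) * A ^ (k - e)) else 0)) t" .
    then show ?thesis unfolding FF_def P_def t_def[symmetric] e1 e2
      by (simp add: algebra_simps)
  qed
  have co: "coeff P j = 0" if "j \<ge> k" for j
  proof -
    have z: "coeff (if even e then smult (2 * of_nat (k choose e)) (B ^ (e div 2) * A ^ (k - e)) else 0) j = 0"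
      if "e \<in> {1..k}" for e
    proof (cases "even e")
      case True
      with that have "e \<ge> 2" by (cases "e = 1") auto
      have "degree (B ^ (e div 2) * A ^ (k - e)) \<le> degree (B ^ (e div 2)) + degree (A ^ (k - e))"
        by (rule degree_mult_le)
      also have "\<dots> \<le> degree B * (e div 2) + degree A * (k - e)"
        by (intro add_mono degree_power_le)
      also have "\<dots> = e div 2 + (k - e)" by (simp add: A_def B_def)
      finally have dd: "degree (B ^ (e div 2) * A ^ (k - e)) \<le> e div 2 + (k - e)" .
      have "e \<le> k" using that by simp
      then have "e div 2 + (k - e) < k" using \<open>e \<ge> 2\<close> by presburger
      then have "degree (B ^ (e div 2) * A ^ (k - e)) < j" using dd \<open>j \<ge> k\<close> by linarith
      then show ?thesis using True by (simp add: coeff_eq_0)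
    qed simp
    have s: "{..k} = insert 0 {1..k}" by auto
    have "coeff P j = 2 * coeff (A ^ k) j - 2 * coeff ([:0,1:] ^ k) j"
      unfolding P_def s coeff_diff coeff_sum using z by (simp add: sum.neutral)
    also have "\<dots> = 0"
    proof (cases "j = k")
      case True then show ?thesis using coeff_linear_power[of "1/2" k] coeff_linear_power[of "0::rat" k]
        by (simp add: A_def)
    next
      case False
      then have "j > k" using that by simp
      moreover have "degree (A ^ k) \<le> k" using degree_power_le[of A k] by (simp add: A_def)
      moreover have "degree ([:0::rat,1:] ^ k) \<le> k" using degree_power_le[of "[:0::rat,1:]" k] by simp
      ultimately show ?thesis by (simp add: coeff_eq_0)
    qed
    finally show ?thesis .
  qed
  show ?thesis
    apply (rule exI[of _ "coeff P"])
    using val poly_sum_lt[of k P] co by simp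
qed


lemma sp_pos: "strict_partition la \<Longrightarrow> i < length la \<Longrightarrow> la ! i > 0"
  unfolding strict_partition_def by (auto dest: nth_mem)

lemma sp_dec: "strict_partition la \<Longrightarrow> i < j \<Longrightarrow> j < length la \<Longrightarrow> la ! i > la ! j"
  unfolding strict_partition_def by (simp add: sorted_wrt_iff_nth_less)

lemma sp_distinct: "strict_partition la \<Longrightarrow> distinct la"
  unfolding strict_partition_def
  by (metis distinct_rev sorted_wrt_rev strict_sorted_iff)

lemma mem_diagram: "(i, j) \<in> diagram la \<longleftrightarrow> 1 \<le> i \<and> i \<le> length la \<and> i + 1 \<le> j \<and> j \<le> i + la ! (i - 1)"
  by (simp add: diagram_def)

lemma row_nonempty:
  assumes "strict_partition la" "1 \<le> i"
  shows "(i, i+1) \<in> diagram la \<longleftrightarrow> i \<le> length la"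
proof -
  have "i \<le> length la \<Longrightarrow> la ! (i - 1) > 0" using sp_pos[OF assms(1), of "i - 1"] assms(2) by simp
  then show ?thesis using assms(2) by (auto simp: mem_diagram)
qed

lemma row_eq:
  assumes "strict_partition la" "strict_partition mu" "1 \<le> i"
    and "\<And>j. (i, j) \<in> diagram la \<longleftrightarrow> (i, j) \<in> diagram mu"
  shows "(i \<le> length la \<longleftrightarrow> i \<le> length mu) \<and> (i \<le> length la \<longrightarrow> la ! (i - 1) = mu ! (i - 1))"
proof -
  have L: "i \<le> length la \<longleftrightarrow> i \<le> length mu"
    using row_nonempty[OF assms(1,3)] row_nonempty[OF assms(2,3)] assms(4) by blast
  moreover have "la ! (i - 1) = mu ! (i - 1)" if "i \<le> length la"
  proof -
    have p1: "la ! (i - 1) > 0" "mu ! (i - 1) > 0" using sp_pos[OF assms(1), of "i - 1"] sp_pos[OF assms(2), of "i - 1"] that L assms(3) by auto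
    have "(i, i + la ! (i - 1)) \<in> diagram la" using that assms(3) p1 by (simp add: mem_diagram)
    then have a: "la ! (i - 1) \<le> mu ! (i - 1)" using assms(4)[of "i + la ! (i - 1)"] by (simp add: mem_diagram)
    have "(i, i + mu ! (i - 1)) \<in> diagram mu" using that L assms(3) p1 by (simp add: mem_diagram)
    then have "mu ! (i - 1) \<le> la ! (i - 1)" using assms(4)[of "i + mu ! (i - 1)"] by (simp add: mem_diagram)
    with a show ?thesis by simp
  qed
  ultimately show ?thesis by blast
qed

lemma sum_list_set: "strict_partition la \<Longrightarrow> sum_list (map g la) = sum g (set la)"
  using sp_distinct sum.distinct_set_conv_list by metis

lemma plus_sum:
  fixes g :: "nat \<Rightarrow> rat"
  assumes la: "strict_partition la" and mu: "strict_partition mu"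
    and b: "b \<notin> diagram la" and d: "diagram mu = insert b (diagram la)" and g0: "g 0 = 0"
  shows "\<exists>c\<ge>1. Defs.content b = int c \<and> sum_list (map g mu) = sum_list (map g la) + g c - g (c - 1)"
proof -
  obtain p q where bpq: "b = (p, q)" by (cases b)
  have bm: "(p, q) \<in> diagram mu" using d bpq by auto
  then have p1: "1 \<le> p" "p \<le> length mu" "p + 1 \<le> q" "q \<le> p + mu ! (p - 1)" by (auto simp: mem_diagram)
  have other: "\<And>j. (i, j) \<in> diagram la \<longleftrightarrow> (i, j) \<in> diagram mu" if "i \<noteq> p" for i
    using d bpq that by auto
  have oth: "(i \<le> length la \<longleftrightarrow> i \<le> length mu) \<and> (i \<le> length la \<longrightarrow> la ! (i - 1) = mu ! (i - 1))"
    if "i \<noteq> p" "1 \<le> i" for i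
    by (rule row_eq[OF la mu that(2) other[OF that(1)]])
  show ?thesis
  proof (cases "p \<le> length la")
    case True
    let ?L = "la ! (p - 1)"
    have qL: "\<not> q \<le> p + ?L" using b bpq p1 True by (auto simp: mem_diagram)
    have "(p, p + mu ! (p - 1)) \<in> diagram mu" using p1 by (simp add: mem_diagram)
    have "(p, p + ?L + 1) \<in> diagram mu" using p1 qL by (simp add: mem_diagram)
    then have "(p, p + ?L + 1) \<in> insert b (diagram la)" using d by simp
    then have q: "q = p + ?L + 1" using bpq by (auto simp: mem_diagram)
    have "(p, p + mu ! (p - 1)) \<in> insert b (diagram la)" using d \<open>(p, p + mu ! (p - 1)) \<in> diagram mu\<close> by simp
    then have mup: "mu ! (p - 1) = ?L + 1" using bpq q p1 by (auto simp: mem_diagram)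
    have len: "length mu = length la"
    proof -
      have "length la \<ge> 1" using True p1 by simp
      have A: "length la \<le> length mu"
      proof (cases "length la = p")
        case True then show ?thesis using p1 by simp
      next
        case False then show ?thesis using oth[of "length la"] \<open>length la \<ge> 1\<close> by simp
      qed
      have "\<not> Suc (length la) \<le> length mu" using oth[of "Suc (length la)"] True by simp
      with A show ?thesis by simp
    qed
    have mueq: "mu = la[p - 1 := ?L + 1]"
    proof (rule nth_equalityI)
      show "length mu = length (la[p - 1 := ?L + 1])" using len by simp
      fix n assume n: "n < length mu"
      show "mu ! n = la[p - 1 := ?L + 1] ! n"
      proof (cases "n = p - 1")
        case True then show ?thesis using mup n len by simp
      next
        case False
        then have "Suc n \<noteq> p" using p1 by auto
        then show ?thesis using oth[of "Suc n"] n len False by simp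
      qed
    qed
    have idx: "p - 1 < length la" using True p1 by simp
    have s1: "sum_list (map g la) = (\<Sum>n<length la. g (la ! n))"
      by (simp add: sum_list_sum_nth atLeast0LessThan)
    have s2: "sum_list (map g mu) = (\<Sum>n<length la. g (mu ! n))"
      using len by (simp add: sum_list_sum_nth atLeast0LessThan)
    have "(\<Sum>n<length la. g (mu ! n)) = (\<Sum>n<length la. g (la ! n) + (if n = p - 1 then g (?L + 1) - g ?L else 0))"
      by (rule sum.cong) (auto simp: mueq nth_list_update)
    also have "\<dots> = (\<Sum>n<length la. g (la ! n)) + (g (?L + 1) - g ?L)"
      using idx by (simp add: sum.distrib)
    finally have "sum_list (map g mu) = sum_list (map g la) + g (?L + 1) - g (?L + 1 - 1)"
      using s1 s2 by simp
    moreover have "Defs.content b = int (?L + 1)" using bpq q by (simp add: Defs.content_def)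
    ultimately show ?thesis by (intro exI[of _ "?L + 1"]) auto
  next
    case False
    have pl: "p = Suc (length la)"
    proof (rule ccontr)
      assume "p \<noteq> Suc (length la)"
      then have "p > Suc (length la)" using False by simp
      then show False using oth[of "Suc (length la)"] p1 by simp
    qed
    have lenm: "length mu = p"
      using oth[of "Suc p"] p1 pl by simp
    have "(p, p + 1) \<in> diagram mu" using p1 by (simp add: mem_diagram)
    then have "(p, p+1) = b" using d False by (auto simp: mem_diagram)
    then have q: "q = p + 1" using bpq by simp
    have "(p, p + mu ! (p - 1)) \<in> diagram mu" using p1 by (simp add: mem_diagram)
    then have "(p, p + mu ! (p - 1)) = b" using d False by (auto simp: mem_diagram)
    then have mup: "mu ! (p - 1) = 1" using bpq q by simp
    have mueq: "mu = la @ [1]"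
    proof (rule nth_equalityI)
      show "length mu = length (la @ [1])" using lenm pl by simp
      fix n assume n: "n < length mu"
      show "mu ! n = (la @ [1]) ! n"
      proof (cases "n = length la")
        case True then show ?thesis using mup pl by simp
      next
        case False
        then have "n < length la" using n lenm pl by simp
        then show ?thesis using oth[of "Suc n"] pl by (simp add: nth_append)
      qed
    qed
    have "Defs.content b = 1" using bpq q by (simp add: Defs.content_def)
    then show ?thesis using mueq g0 by (intro exI[of _ 1]) auto
  qed
qed


definition Rset :: "nat list \<Rightarrow> nat set" where
  "Rset la = {a. 1 \<le> a \<and> a \<le> length la \<and> (a = length la \<or> la ! a + 2 \<le> la ! (a - 1))}"

lemma oc_sub:
  assumes la: "strict_partition la" and bo: "b \<in> outer_corners la"
  shows "b \<in> (\<lambda>a. (a, a + la ! (a - 1))) ` Rset la"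
proof -
  obtain mu where bd: "b \<in> diagram la" and mu: "strict_partition mu" and d: "diagram mu = diagram la - {b}"
    using bo unfolding outer_corners_def by blast
  obtain p q where bpq: "b = (p, q)" by (cases b)
  have p1: "1 \<le> p" "p \<le> length la" "p + 1 \<le> q" "q \<le> p + la ! (p - 1)" using bd bpq by (auto simp: mem_diagram)
  have other: "\<And>j. (i, j) \<in> diagram la \<longleftrightarrow> (i, j) \<in> diagram mu" if "i \<noteq> p" for i
    using d bpq that by auto
  have oth: "(i \<le> length la \<longleftrightarrow> i \<le> length mu) \<and> (i \<le> length la \<longrightarrow> la ! (i - 1) = mu ! (i - 1))"
    if "i \<noteq> p" "1 \<le> i" for i
    by (rule row_eq[OF la mu that(2) other[OF that(1)]])
  have q: "q = p + la ! (p - 1)"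
  proof (rule ccontr)
    assume "q \<noteq> p + la ! (p - 1)"
    then have "q < p + la ! (p - 1)" using p1 by simp
    then have "(p, p + la ! (p - 1)) \<in> diagram mu" using d bpq p1 by (auto simp: mem_diagram)
    then have "p \<le> length mu" "la ! (p - 1) \<le> mu ! (p - 1)" by (auto simp: mem_diagram)
    then have "(p, q) \<in> diagram mu" using p1 by (simp add: mem_diagram)
    then show False using d bpq by auto
  qed
  have "p \<in> Rset la"
  proof (cases "p = length la")
    case True then show ?thesis using p1 by (simp add: Rset_def)
  next
    case False
    then have pl: "p < length la" using p1 by simp
    have o: "Suc p \<le> length mu" "la ! p = mu ! p" using oth[of "Suc p"] pl by auto
    have pos: "mu ! (p - 1) > 0" using sp_pos[OF mu, of "p - 1"] o p1 by simp
    have "(p, p + mu ! (p - 1)) \<in> diagram mu" using o p1 pos by (simp add: mem_diagram)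
    then have "(p, p + mu ! (p - 1)) \<in> diagram la" "(p, p + mu ! (p - 1)) \<noteq> b" using d by auto
    then have "mu ! (p - 1) < la ! (p - 1)" using bpq q by (auto simp: mem_diagram)
    moreover have "mu ! (p - 1) > mu ! p" using sp_dec[OF mu, of "p - 1" p] o p1 by simp
    ultimately show ?thesis using o p1 pl by (simp add: Rset_def)
  qed
  then show ?thesis using bpq q by auto
qed

lemma oc_sup:
  assumes la: "strict_partition la" and a: "a \<in> Rset la"
  shows "(a, a + la ! (a - 1)) \<in> outer_corners la"
proof -
  let ?b = "(a, a + la ! (a - 1))"
  have a1: "1 \<le> a" "a \<le> length la" "a = length la \<or> la ! a + 2 \<le> la ! (a - 1)" using a by (auto simp: Rset_def)
  have pos: "la ! (a - 1) > 0" using sp_pos[OF la, of "a - 1"] a1 by simp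
  have bd: "?b \<in> diagram la" using a1 pos by (simp add: mem_diagram)
  have "\<exists>mu. strict_partition mu \<and> diagram mu = diagram la - {?b}"
  proof (cases "la ! (a - 1) = 1")
    case True
    have al: "a = length la" using a1 True by auto
    define mu where "mu = butlast la"
    have "strict_partition mu" using la unfolding mu_def strict_partition_def
      by (metis butlast_conv_take in_set_butlastD sorted_wrt_take)
    moreover have "diagram mu = diagram la - {?b}"
    proof (rule set_eqI)
      fix x :: "nat \<times> nat"
      obtain i j where x: "x = (i, j)" by (cases x)
      show "x \<in> diagram mu \<longleftrightarrow> x \<in> diagram la - {?b}"
        unfolding x mu_def using al True a1
        by (cases "i = length la") (auto simp: nth_butlast mem_diagram)
    qed
    ultimately show ?thesis by blast
  next
    case False
    define mu where "mu = la[a - 1 := la ! (a - 1) - 1]"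
    have "strict_partition mu"
      unfolding strict_partition_def sorted_wrt_iff_nth_less
    proof (intro conjI allI impI ballI)
      fix i j assume ij: "i < j" "j < length mu"
      then have jl: "j < length la" by (simp add: mu_def)
      show "mu ! i > mu ! j"
      proof (cases "j = a - 1")
        case True
        then show ?thesis using sp_dec[OF la, of i j] ij jl pos by (simp add: mu_def nth_list_update)
      next
        case jn: False
        show ?thesis
        proof (cases "i = a - 1")
          case True
          then have "a < length la" using ij jl a1 by simp
          then have "la ! a + 2 \<le> la ! (a - 1)" using a1 by simp
          moreover have "la ! j \<le> la ! a"
          proof -
            have "a \<le> j" using True ij jn by linarith
            then show ?thesis using sp_dec[OF la, of a j] jl by (cases "a = j") auto
          qed
          ultimately show ?thesis using True jn jl a1 by (simp add: mu_def nth_list_update)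
        next
          case False
          then show ?thesis using sp_dec[OF la, of i j] ij jl jn by (simp add: mu_def nth_list_update)
        qed
      qed
    next
      fix x assume "x \<in> set mu"
      then obtain n where n: "n < length mu" "x = mu ! n" by (auto simp: in_set_conv_nth)
      then show "0 < x" using sp_pos[OF la, of n] False pos by (cases "n = a - 1") (auto simp: mu_def nth_list_update)
    qed
    moreover have "diagram mu = diagram la - {?b}"
    proof (rule set_eqI)
      fix x :: "nat \<times> nat"
      obtain i j where x: "x = (i, j)" by (cases x)
      show "x \<in> diagram mu \<longleftrightarrow> x \<in> diagram la - {?b}"
        unfolding x mu_def using a1 pos
        by (cases "i = a") (auto simp: nth_list_update mem_diagram)
    qed
    ultimately show ?thesis by blast
  qed
  then show ?thesis using bd unfolding outer_corners_def by blast
qed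

lemma oc_char:
  assumes la: "strict_partition la"
  shows "outer_corners la = (\<lambda>a. (a, a + la ! (a - 1))) ` Rset la"
  using oc_sub[OF la] oc_sup[OF la] by blast


lemma Rset_finite: "finite (Rset la)"
  by (rule finite_subset[of _ "{1..length la}"]) (auto simp: Rset_def)

lemma oc_finite: "strict_partition la \<Longrightarrow> finite (outer_corners la)"
  using oc_char Rset_finite by simp

lemma num_corners_eq: "strict_partition la \<Longrightarrow> num_corners la = card (Rset la)"
  unfolding num_corners_def oc_char
  by (rule card_image) (auto simp: inj_on_def)

lemma corner_props:
  assumes la: "strict_partition la"
  shows "\<And>j. 1 \<le> j \<Longrightarrow> j \<le> num_corners la \<Longrightarrow> corner la j \<in> outer_corners la"
    and "\<And>j j'. 1 \<le> j \<Longrightarrow> j < j' \<Longrightarrow> j' \<le> num_corners la \<Longrightarrow> corner la j' < corner la j"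
    and "\<And>b. b \<in> outer_corners la \<Longrightarrow> \<exists>j. 1 \<le> j \<and> j \<le> num_corners la \<and> corner la j = b"
proof -
  define xs where "xs = sorted_list_of_set (outer_corners la)"
  have fin: "finite (outer_corners la)" by (rule oc_finite[OF la])
  have len: "length xs = num_corners la" by (simp add: xs_def num_corners_def)
  have set: "set xs = outer_corners la" using fin by (simp add: xs_def)
  have sw: "sorted_wrt (<) xs" by (simp add: xs_def strict_sorted_list_of_set)
  have cj: "corner la j = xs ! (num_corners la - j)" if "1 \<le> j" "j \<le> num_corners la" for j
    unfolding corner_def xs_def[symmetric] using that len by (simp add: rev_nth)
  show "\<And>j. 1 \<le> j \<Longrightarrow> j \<le> num_corners la \<Longrightarrow> corner la j \<in> outer_corners la"
    using cj set len by (metis diff_less less_le_trans nth_mem zero_less_one)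
  show "\<And>j j'. 1 \<le> j \<Longrightarrow> j < j' \<Longrightarrow> j' \<le> num_corners la \<Longrightarrow> corner la j' < corner la j"
  proof -
    fix j j' assume a: "1 \<le> j" "j < j'" "j' \<le> num_corners la"
    then show "corner la j' < corner la j"
      using cj[of j] cj[of j'] sw len by (simp add: sorted_wrt_iff_nth_less)
  qed
  show "\<And>b. b \<in> outer_corners la \<Longrightarrow> \<exists>j. 1 \<le> j \<and> j \<le> num_corners la \<and> corner la j = b"
  proof -
    fix b assume "b \<in> outer_corners la"
    then obtain n where n: "n < length xs" "xs ! n = b" using set by (metis in_set_conv_nth)
    show "\<exists>j. 1 \<le> j \<and> j \<le> num_corners la \<and> corner la j = b"
      using n cj[of "num_corners la - n"] len by (intro exI[of _ "num_corners la - n"]) auto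
  qed
qed

lemma alpha_props:
  assumes la: "strict_partition la" and j: "1 \<le> j" "j \<le> num_corners la"
  shows "alpha la j \<in> Rset la" "corner la j = (alpha la j, alpha la j + la ! (alpha la j - 1))"
    "beta la j = alpha la j + la ! (alpha la j - 1)"
proof -
  have "corner la j \<in> (\<lambda>a. (a, a + la ! (a - 1))) ` Rset la"
    using corner_props(1)[OF la j] oc_char[OF la] by simp
  then obtain a where a: "a \<in> Rset la" "corner la j = (a, a + la ! (a - 1))" by blast
  have "alpha la j = a" using a j by (simp add: alpha_def)
  then show "alpha la j \<in> Rset la" "corner la j = (alpha la j, alpha la j + la ! (alpha la j - 1))"
    "beta la j = alpha la j + la ! (alpha la j - 1)"
    using a j by (auto simp: beta_def)
qed

lemma alpha_mono:
  assumes la: "strict_partition la" and j: "1 \<le> j" "j < j'" "j' \<le> num_corners la"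
  shows "alpha la j' < alpha la j"
proof -
  have "corner la j' < corner la j" by (rule corner_props(2)[OF la j])
  then show ?thesis
    using alpha_props(2)[OF la, of j] alpha_props(2)[OF la, of j'] j
    by (cases "alpha la j' = alpha la j") auto
qed

lemma alpha_surj:
  assumes la: "strict_partition la" and a: "a \<in> Rset la"
  shows "\<exists>j. 1 \<le> j \<and> j \<le> num_corners la \<and> alpha la j = a"
proof -
  have "(a, a + la ! (a - 1)) \<in> outer_corners la" using oc_char[OF la] a by auto
  then obtain j where j: "1 \<le> j" "j \<le> num_corners la" "corner la j = (a, a + la ! (a - 1))"
    using corner_props(3)[OF la] by blast
  then show ?thesis using alpha_props(2)[OF la j(1,2)] by auto
qed

lemma tele: "(\<Sum>j=1..n. f j - f (Suc j)) = f 1 - f (Suc n :: nat) " for f :: "nat \<Rightarrow> rat"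
  by (induction n) auto


lemma qk_formula:
  assumes la: "strict_partition la"
  shows "qk k la = FF k 1 + sum_list (map (\<lambda>s. FF k (int s + 1) - FF k (int s)) la)"
proof -
  define m where "m = num_corners la"
  define l where "l = length la"
  define A where "A = alpha la"
  define g where "g = (\<lambda>s::nat. FF k (int s + 1) - FF k (int s))"
  define G where "G = (\<lambda>n. \<Sum>r<n. g (la ! r))"
  have qk_eq: "qk k la = (\<Sum>i = 0..m. FF k (xcont la i)) - (\<Sum>i = 1..m. FF k (ycont la i))"
    by (simp add: qk_def FF_def m_def)
  have Gl: "G l = sum_list (map g la)"
    by (simp add: G_def l_def sum_list_sum_nth atLeast0LessThan)
  show ?thesis
  proof (cases "l = 0")
    case True
    then have "Rset la = {}" by (auto simp: Rset_def l_def)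
    then have m0: "m = 0" using num_corners_eq[OF la] by (simp add: m_def)
    have "xcont la 0 = 1" using True m0 by (simp add: xcont_def beta_def alpha_def m_def l_def)
    then show ?thesis using qk_eq m0 True by (simp add: l_def)
  next
    case False
    have lR: "l \<in> Rset la" using False by (simp add: Rset_def l_def Suc_le_eq)
    then have m1: "m \<ge> 1" using num_corners_eq[OF la] Rset_finite[of la] unfolding m_def
      by (metis card_0_eq empty_iff less_one not_le)
    have Aprops: "A j \<in> Rset la" "beta la j = A j + la ! (A j - 1)" if "1 \<le> j" "j \<le> m" for j
      using alpha_props[OF la that[unfolded m_def]] by (simp_all add: A_def)
    have Arng: "1 \<le> A j" "A j \<le> l" if "1 \<le> j" "j \<le> m" for j
      using Aprops(1)[OF that] by (auto simp: Rset_def l_def)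
    have Amono: "A j' < A j" if "1 \<le> j" "j < j'" "j' \<le> m" for j j'
      using alpha_mono[OF la that[unfolded m_def]] by (simp add: A_def)
    have Am1: "A (Suc m) = 0" by (simp add: A_def alpha_def m_def)
    have A1: "A 1 = l"
    proof -
      obtain t where t: "1 \<le> t" "t \<le> m" "A t = l" using alpha_surj[OF la lR] by (auto simp: A_def m_def)
      show ?thesis
      proof (cases "t = 1")
        case False
        then have "A t < A 1" using Amono[of 1 t] t by simp
        then show ?thesis using Arng[of 1] m1 t by simp
      qed (use t in simp)
    qed
    have Kgap: "A (Suc j) < A j" if "1 \<le> j" "j \<le> m" for j
    proof (cases "j = m")
      case True then show ?thesis using Am1 Arng[OF that] by simp
    next
      case False then show ?thesis using Amono[of j "Suc j"] that by simp
    qed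
    have K2: "r \<notin> Rset la" if j: "1 \<le> j" "j \<le> m" and r: "A (Suc j) < r" "r < A j" for j r
    proof
      assume "r \<in> Rset la"
      then obtain t where t: "1 \<le> t" "t \<le> m" "A t = r" using alpha_surj[OF la] by (auto simp: A_def m_def)
      have "\<not> t \<le> j"
      proof
        assume "t \<le> j"
        then show False using Amono[of t j] t j r by (cases "t = j") auto
      qed
      moreover have "\<not> t \<ge> Suc j"
      proof
        assume "t \<ge> Suc j"
        then show False using Amono[of "Suc j" t] t j r by (cases "t = Suc j") auto
      qed
      ultimately show False by simp
    qed
    have K3: "la ! (A j - 1 - d) = la ! (A j - 1) + d" if j: "1 \<le> j" "j \<le> m" and d: "d < A j - A (Suc j)" for j d
      using d
    proof (induction d)
      case 0 then show ?case by simp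
    next
      case (Suc d)
      define \<rho> where "\<rho> = A j - 1 - d"
      have rr: "A (Suc j) < \<rho>" "\<rho> < A j" "1 \<le> \<rho>" using Suc.prems Kgap[OF j] by (auto simp: \<rho>_def)
      have nR: "\<rho> \<notin> Rset la" by (rule K2[OF j rr(1,2)])
      have rl: "\<rho> < l" using rr Arng[OF j] by simp
      have dec: "la ! \<rho> < la ! (\<rho> - 1)" using sp_dec[OF la, of "\<rho> - 1" \<rho>] rr rl by (simp add: l_def)
      have "\<not> la ! \<rho> + 2 \<le> la ! (\<rho> - 1)" using nR rr rl by (simp add: Rset_def l_def)
      then have e: "la ! (\<rho> - 1) = la ! \<rho> + 1" using dec by simp
      have "la ! \<rho> = la ! (A j - 1) + d" using Suc by (simp add: \<rho>_def)
      moreover have "A j - 1 - Suc d = \<rho> - 1" by (simp add: \<rho>_def)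
      ultimately show ?case using e by simp
    qed
    have K4: "FF k (xcont la j) - FF k (ycont la j) = G (A j) - G (A (Suc j))" if j: "1 \<le> j" "j \<le> m" for j
    proof -
      define y where "y = la ! (A j - 1)"
      have ind: "G (A j) - G (A j - d) = FF k (int (y + d)) - FF k (int y)" if "d \<le> A j - A (Suc j)" for d
        using that
      proof (induction d)
        case 0 then show ?case by simp
      next
        case (Suc d)
        have e1: "A j - d = Suc (A j - Suc d)" using Suc.prems Kgap[OF j] by simp
        have e2: "la ! (A j - Suc d) = y + d"
          using K3[OF j, of d] Suc.prems Kgap[OF j] by (simp add: y_def)
        have "G (A j - d) = G (A j - Suc d) + g (y + d)" unfolding e1 G_def using e2 by simp
        then show ?case using Suc g_def by (simp add: algebra_simps)
      qed
      have "xcont la j = int (y + (A j - A (Suc j)))"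
        using Aprops(2)[OF j] Kgap[OF j] by (simp add: xcont_def A_def y_def)
      moreover have "ycont la j = int y"
        using Aprops(2)[OF j] by (simp add: ycont_def A_def y_def)
      moreover have "A j - (A j - A (Suc j)) = A (Suc j)" using Kgap[OF j] by simp
      ultimately show ?thesis using ind[of "A j - A (Suc j)"] by simp
    qed
    have x0: "xcont la 0 = 1" using A1 by (simp add: xcont_def beta_def A_def l_def)
    have "qk k la = FF k (xcont la 0) + ((\<Sum>i = 1..m. FF k (xcont la i)) - (\<Sum>i = 1..m. FF k (ycont la i)))"
      using qk_eq by (simp add: sum.atLeast_Suc_atMost)
    also have "\<dots> = FF k 1 + (\<Sum>i = 1..m. G (A i) - G (A (Suc i)))"
      using x0 K4 by (simp add: sum_subtractf[symmetric])
    also have "\<dots> = FF k 1 + G l"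
      using tele[of "\<lambda>i. G (A i)" m] A1 Am1 by (simp add: G_def)
    finally show ?thesis using Gl by (simp add: g_def)
  qed
qed


theorem theorem3p5:
  fixes k :: nat
  shows "\<exists>\<xi> :: nat \<Rightarrow> rat. \<forall>la i mu.
           strict_partition la \<and> i \<le> num_corners la \<and>
           (i = 0 \<longrightarrow> num_corners la = 0 \<or> ycont la 1 > 1) \<and>
           plus_partition la i mu \<longrightarrow>
           qk k mu - qk k la = (\<Sum>j<k. \<xi> j * of_int (binom2 (xcont la i)) ^ j)"
proof -
  obtain \<xi> :: "nat \<Rightarrow> rat" where xi: "\<And>c. FF k (c + 1) - 2 * FF k c + FF k (c - 1)
      = (\<Sum>j<k. \<xi> j * of_int (binom2 c) ^ j)"
    using second_diff_poly[of k] by blast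
  show ?thesis
  proof (intro exI[of _ \<xi>] allI impI)
    fix la i mu
    assume h: "strict_partition la \<and> i \<le> num_corners la \<and>
           (i = 0 \<longrightarrow> num_corners la = 0 \<or> ycont la 1 > 1) \<and> plus_partition la i mu"
    then have la: "strict_partition la" and mu: "strict_partition mu"
      and "\<exists>b. b \<notin> diagram la \<and> Defs.content b = xcont la i \<and> diagram mu = insert b (diagram la)"
      by (auto simp: plus_partition_def)
    then obtain b where b: "b \<notin> diagram la" "Defs.content b = xcont la i" "diagram mu = insert b (diagram la)"
      by blast
    define g where "g = (\<lambda>s::nat. FF k (int s + 1) - FF k (int s))"
    have g0: "g 0 = 0" by (simp add: g_def FF_def binom2_def)
    obtain c where c: "c \<ge> 1" "Defs.content b = int c"
      "sum_list (map g mu) = sum_list (map g la) + g c - g (c - 1)"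
      using plus_sum[where g=g, OF la mu b(1) b(3) g0] by blast
    have "qk k mu - qk k la = g c - g (c - 1)"
      using qk_formula[OF la, of k] qk_formula[OF mu, of k] c(3) by (simp add: g_def)
    also have "\<dots> = FF k (int c + 1) - 2 * FF k (int c) + FF k (int c - 1)"
      using c(1) by (simp add: g_def of_nat_diff)
    also have "\<dots> = (\<Sum>j<k. \<xi> j * of_int (binom2 (xcont la i)) ^ j)"
      using xi[of "int c"] b(2) c(2) by simp
    finally show "qk k mu - qk k la = (\<Sum>j<k. \<xi> j * of_int (binom2 (xcont la i)) ^ j)" .
  qed
qed

end
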